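(* The set of flat formulas of $\mathbf{PT}$ is closed under flat substitutions: if $\phi$ is a flat formula of $\mathbf{PT}$ and $\sigma$ is a flat substitution of $\mathbf{PT}$, then $\sigma(\phi)$ is flat.
   Context: Fix a countably infinite set Prop of propositional variables. A valuation is a function $v:\mathrm{Prop}\to\{0,1\}$; a team is a set of valuations. Formulas of $\mathbf{PT}$: $\phi::=p\mid\bot\mid\top\mid\,=\!(\phi_1,\dots,\phi_n,\phi)\mid\neg\phi\mid\phi\wedge\phi\mid\phi\otimes\phi\mid\phi\vee\phi\mid\phi\to\phi$. Satisfaction on a team $X$: $X\models p$ iff $v(p)=1$ for all $v\in X$; $X\models\bot$ iff $X=\emptyset$; $X\models\top$ always; $\wedge$ is conjunction of conditions; $X\models\phi\otimes\psi$ iff $X=Y\cup Z$ with $Y\models\phi$, $Z\models\psi$; $X\models\phi\vee\psi$ iff $X\models\phi$ or $X\models\psi$; $X\models\phi\to\psi$ iff every $Y\subseteq X$ with $Y\models\phi$ satisfies $\psi$; $X\models\neg\phi$ iff $\{v\}\not\models\phi$ for all $v\in X$; $X\models\,=\!(\phi_1,\dots,\phi_n,\psi)$ iff $X\models\bigwedge_i(\phi_i\vee(\phi_i\to\bot))\to(\psi\vee(\psi\to\bot))$. $\phi$ is flat if for all teams $X$: $X\models\phi$ iff $\{v\}\models\phi$ for all $v\in X$. A substitution is a map on formulas commuting with all connectives and atoms; it is flat if $\sigma(p)$ is flat for every $p\in\mathrm{Prop}$. *)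

theory Defs
  imports Main
begin

type_synonym valuation = "nat \<Rightarrow> bool"
type_synonym team = "valuation set"

datatype fml =
    Var nat
  | Bot
  | Top
  | Dep "fml list" fml
  | Neg fml
  | Conj fml fml
  | Tensor fml fml
  | Disj fml fml
  | Imp fml fml

text \<open>Team semantics. The dependence atom is given by the literal unfolding of
  X |= (AND_i (phi_i v (phi_i -> bot))) -> (psi v (psi -> bot)).\<close>
fun sat :: "team \<Rightarrow> fml \<Rightarrow> bool" where
  "sat X (Var p) = (\<forall>v\<in>X. v p)"
| "sat X Bot = (X = {})"
| "sat X Top = True"
| "sat X (Dep phis psi) =
     (\<forall>Y\<subseteq>X. (\<forall>phi\<in>set phis. sat Y phi \<or> (\<forall>Z\<subseteq>Y. sat Z phi \<longrightarrow> Z = {}))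
        \<longrightarrow> (sat Y psi \<or> (\<forall>Z\<subseteq>Y. sat Z psi \<longrightarrow> Z = {})))"
| "sat X (Neg phi) = (\<forall>v\<in>X. \<not> sat {v} phi)"
| "sat X (Conj phi psi) = (sat X phi \<and> sat X psi)"
| "sat X (Tensor phi psi) = (\<exists>Y Z. X = Y \<union> Z \<and> sat Y phi \<and> sat Z psi)"
| "sat X (Disj phi psi) = (sat X phi \<or> sat X psi)"
| "sat X (Imp phi psi) = (\<forall>Y\<subseteq>X. sat Y phi \<longrightarrow> sat Y psi)"

definition flat :: "fml \<Rightarrow> bool" where
  "flat phi \<longleftrightarrow> (\<forall>X. sat X phi \<longleftrightarrow> (\<forall>v\<in>X. sat {v} phi))"

fun subst :: "(nat \<Rightarrow> fml) \<Rightarrow> fml \<Rightarrow> fml" where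
  "subst s (Var p) = s p"
| "subst s Bot = Bot"
| "subst s Top = Top"
| "subst s (Dep phis psi) = Dep (map (subst s) phis) (subst s psi)"
| "subst s (Neg phi) = Neg (subst s phi)"
| "subst s (Conj phi psi) = Conj (subst s phi) (subst s psi)"
| "subst s (Tensor phi psi) = Tensor (subst s phi) (subst s psi)"
| "subst s (Disj phi psi) = Disj (subst s phi) (subst s psi)"
| "subst s (Imp phi psi) = Imp (subst s phi) (subst s psi)"

definition flat_subst :: "(nat \<Rightarrow> fml) \<Rightarrow> bool" where
  "flat_subst s \<longleftrightarrow> (\<forall>p. flat (s p))"

end

theory Submission
  imports Defs
begin

lemma img_pre: "Y' \<subseteq> f ` X \<Longrightarrow> f ` (X \<inter> f -` Y') = Y'"
  by blast

lemma all_img: "(\<forall>Y\<subseteq>X. P (f ` Y)) = (\<forall>Y'\<subseteq>f ` X. P Y')"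
proof (intro iffI allI impI)
  fix Y' assume L: "\<forall>Y\<subseteq>X. P (f ` Y)" and Y': "Y' \<subseteq> f ` X"
  have "X \<inter> f -` Y' \<subseteq> X" by (rule Int_lower1)
  then have "P (f ` (X \<inter> f -` Y'))" by (rule L[rule_format])
  then show "P Y'" by (simp only: img_pre[OF Y'])
next
  fix Y assume R: "\<forall>Y'\<subseteq>f ` X. P Y'" and "Y \<subseteq> X"
  then have "f ` Y \<subseteq> f ` X" by (intro image_mono)
  then show "P (f ` Y)" by (rule R[rule_format])
qed

lemma key:
  assumes fs: "flat_subst s"
  shows "sat X (subst s phi) = sat ((\<lambda>v p. sat {v} (s p)) ` X) phi"

proof (induction phi arbitrary: X)
  case (Var p)
  have "flat (s p)" using fs unfolding flat_subst_def by blast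
  then have E: "sat X (s p) = (\<forall>v\<in>X. sat {v} (s p))" unfolding flat_def by (rule spec)
  show ?case unfolding subst.simps sat.simps E by auto
next
  case (Dep phis psi)
  let ?f = "\<lambda>v p. sat {v} (s p)"
  have A: "(\<forall>Z\<subseteq>Y. sat Z (subst s q) \<longrightarrow> Z = {}) = (\<forall>Z'\<subseteq>?f ` Y. sat Z' q \<longrightarrow> Z' = {})"
    if IH: "\<And>X. sat X (subst s q) = sat (?f ` X) q" for q Y
  proof -
    have "(\<forall>Z\<subseteq>Y. sat Z (subst s q) \<longrightarrow> Z = {}) = (\<forall>Z\<subseteq>Y. sat (?f ` Z) q \<longrightarrow> ?f ` Z = {})"
      by (simp only: IH image_is_empty)
    also have "\<dots> = (\<forall>Z'\<subseteq>?f ` Y. sat Z' q \<longrightarrow> Z' = {})"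
      by (rule all_img)
    finally show ?thesis .
  qed
  have B: "(\<forall>phi\<in>set (map (subst s) phis). sat Y phi \<or> (\<forall>Z\<subseteq>Y. sat Z phi \<longrightarrow> Z = {}))
     = (\<forall>phi\<in>set phis. sat (?f ` Y) phi \<or> (\<forall>Z\<subseteq>?f ` Y. sat Z phi \<longrightarrow> Z = {}))" for Y
  proof -
    have "(\<forall>phi\<in>set (map (subst s) phis). sat Y phi \<or> (\<forall>Z\<subseteq>Y. sat Z phi \<longrightarrow> Z = {}))
      = (\<forall>phi\<in>set phis. sat Y (subst s phi) \<or> (\<forall>Z\<subseteq>Y. sat Z (subst s phi) \<longrightarrow> Z = {}))"
      by (simp only: set_map ball_simps)
    also have "\<dots> = (\<forall>phi\<in>set phis. sat (?f ` Y) phi \<or> (\<forall>Z\<subseteq>?f ` Y. sat Z phi \<longrightarrow> Z = {}))"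
    proof (intro ball_cong refl)
      fix phi assume "phi \<in> set phis"
      then have IH: "\<And>X. sat X (subst s phi) = sat (?f ` X) phi" by (rule Dep.IH(1))
      show "(sat Y (subst s phi) \<or> (\<forall>Z\<subseteq>Y. sat Z (subst s phi) \<longrightarrow> Z = {})) =
            (sat (?f ` Y) phi \<or> (\<forall>Z\<subseteq>?f ` Y. sat Z phi \<longrightarrow> Z = {}))"
        using A[OF IH, of Y] IH[of Y] by blast
    qed
    finally show ?thesis .
  qed
  have C: "(sat Y (subst s psi) \<or> (\<forall>Z\<subseteq>Y. sat Z (subst s psi) \<longrightarrow> Z = {}))
     = (sat (?f ` Y) psi \<or> (\<forall>Z\<subseteq>?f ` Y. sat Z psi \<longrightarrow> Z = {}))" for Y
    using A[OF Dep.IH(2), of Y] Dep.IH(2)[of Y] by blast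
  have "sat X (subst s (Dep phis psi)) = (\<forall>Y\<subseteq>X. (\<forall>phi\<in>set phis. sat (?f ` Y) phi \<or> (\<forall>Z\<subseteq>?f ` Y. sat Z phi \<longrightarrow> Z = {}))
        \<longrightarrow> (sat (?f ` Y) psi \<or> (\<forall>Z\<subseteq>?f ` Y. sat Z psi \<longrightarrow> Z = {})))"
    by (simp only: subst.simps sat.simps B C)
  also have "\<dots> = sat (?f ` X) (Dep phis psi)"
    unfolding sat.simps by (rule all_img)
  finally show ?case .
next
  case (Neg phi)
  show ?case by (simp only: subst.simps sat.simps Neg.IH image_insert image_empty) blast
next
  case (Tensor phi psi)
  let ?f = "\<lambda>v p. sat {v} (s p)"
  show ?case
  proof
    assume "sat X (subst s (Tensor phi psi))"
    then obtain Y Z where "X = Y \<union> Z" "sat Y (subst s phi)" "sat Z (subst s psi)" by auto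
    moreover have "sat (?f ` Y) phi" using Tensor.IH(1)[of Y] \<open>sat Y (subst s phi)\<close> by blast
    moreover have "sat (?f ` Z) psi" using Tensor.IH(2)[of Z] \<open>sat Z (subst s psi)\<close> by blast
    ultimately show "sat (?f ` X) (Tensor phi psi)" unfolding sat.simps by (metis image_Un)
  next
    assume "sat (?f ` X) (Tensor phi psi)"
    then obtain Y' Z' where h: "?f ` X = Y' \<union> Z'" "sat Y' phi" "sat Z' psi" by auto
    let ?Y = "X \<inter> ?f -` Y'" and ?Z = "X \<inter> ?f -` Z'"
    have "?f ` ?Y = Y'" "?f ` ?Z = Z'" using h(1) by (intro img_pre, blast)+
    moreover have "X = ?Y \<union> ?Z" using h(1) by auto
    moreover have "sat ?Y (subst s phi)" using Tensor.IH(1)[of ?Y] \<open>?f ` ?Y = Y'\<close> h(2) by simp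
    moreover have "sat ?Z (subst s psi)" using Tensor.IH(2)[of ?Z] \<open>?f ` ?Z = Z'\<close> h(3) by simp
    ultimately show "sat X (subst s (Tensor phi psi))" unfolding subst.simps sat.simps by blast
  qed
next
  case (Imp phi psi)
  let ?f = "\<lambda>v p. sat {v} (s p)"
  have "sat X (subst s (Imp phi psi)) = (\<forall>Y\<subseteq>X. sat (?f ` Y) phi \<longrightarrow> sat (?f ` Y) psi)"
    by (simp only: subst.simps sat.simps Imp.IH)
  also have "\<dots> = sat (?f ` X) (Imp phi psi)" unfolding sat.simps by (rule all_img)
  finally show ?case .
next case (Conj a b) show ?case by (simp only: subst.simps sat.simps Conj.IH)
next case (Disj a b) show ?case by (simp only: subst.simps sat.simps Disj.IH) qed (simp_all only: subst.simps sat.simps image_is_empty)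

theorem lemma3p6:
  assumes "flat phi" and "flat_subst s"
  shows "flat (subst s phi)"
  unfolding flat_def
proof
  fix X
  let ?f = "\<lambda>v p. sat {v} (s p)"
  have F: "\<forall>X. sat X phi = (\<forall>v\<in>X. sat {v} phi)" using assms(1) unfolding flat_def .
  have K: "\<And>X. sat X (subst s phi) = sat (?f ` X) phi" by (rule key[OF assms(2)])
  have "sat X (subst s phi) = sat (?f ` X) phi" by (rule K)
  also have "\<dots> = (\<forall>w\<in>?f ` X. sat {w} phi)" using F by (rule spec)
  also have "\<dots> = (\<forall>v\<in>X. sat {?f v} phi)" by blast
  also have "\<dots> = (\<forall>v\<in>X. sat {v} (subst s phi))"
  proof -
    have "\<And>v. sat {v} (subst s phi) = sat {?f v} phi" using K[of "{_}"] by (simp only: image_insert image_empty)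
    then show ?thesis by (simp only:)
  qed
  finally show "sat X (subst s phi) = (\<forall>v\<in>X. sat {v} (subst s phi))" .
qed

end
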